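(* In a non-degenerate RiFle assignment game, the set of all stable outcomes is a lattice under the partial order $\ge_P$ of $P$-preferences.
   Context: A RiFle assignment game consists of two disjoint sets of agents $P=\{p_1,\dots,p_n\}$ and $Q=\{q_1,\dots,q_n\}$, a pair of nonnegative real numbers $(\beta_{ij},\gamma_{ij})$ for every pair $(p_i,q_j)\in P\times Q$ (write $\alpha_{ij}=\beta_{ij}+\gamma_{ij}$), and a designation of every agent as rigid or flexible. Let $\mathcal R$ be the set of pairs with at least one rigid agent and $\mathcal F$ the set of pairs with both agents flexible. An outcome $(\bar u,\bar v;\mu)$ consists of a matching $\mu$ between $P$ and $Q$ (write $p_i\stackrel{\mu}{\longleftrightarrow} q_j$) and payoff vectors $\bar u,\bar v\in\mathbb R^n$. It is feasible if: (1) $u_i\ge0$, $v_j\ge0$; (2) if a rigid $p_i$ is matched to $q_j$ then $u_i=\beta_{ij}$ and, if $q_j$ is flexible, $v_j\ge\gamma_{ij}$; symmetrically for a rigid $q_j$ matched to $p_i$: $v_j=\gamma_{ij}$ and, if $p_i$ is flexible, $u_i\ge\beta_{ij}$; (3) $\sum_iu_i+\sum_jv_j=\sum_{p_i\stackrel{\mu}{\longleftrightarrow}q_j}\alpha_{ij}$. It is stable if feasible and $u_i+v_j\ge\alpha_{ij}$ for $(p_i,q_j)\in\mathcal F$ and ($u_i\ge\beta_{ij}$ or $v_j\ge\gamma_{ij}$) for $(p_i,q_j)\in\mathcal R$. Reservation prices are modeled by rigid dummy agents; for the following definition an agent left unmatched by a matching is regarded as matched to a rigid dummy agent (whose prescribed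 share $\beta$ or $\gamma$ for him is his reservation price). Given a coalition $C\subseteq P\cup Q$ and a matching $\mu$, the total payoff to $C$ under $\mu$ is forced if every pair matched under $\mu$ with one agent in $C$ and the other outside $C$ is rigid (contains a rigid agent); the forced payoff is then $\sum_{p_i\in C,\ p_i\stackrel{\mu}{\longleftrightarrow}q_j}\beta_{ij}+\sum_{q_j\in C,\ p_i\stackrel{\mu}{\longleftrightarrow}q_j}\gamma_{ij}$. The game is non-degenerate if for any two matchings $\mu,\mu'$: whenever $C$ is a minimal coalition such that the payoff to $C$ is forced under both $\mu$ and $\mu'$, and the two forced payoffs are equal, then $\mu$ and $\mu'$ coincide on $C$. For outcomes, $(\bar u,\bar v;\mu)\ge_P(\bar u',\bar v';\mu')$ means $\bar u\ge\bar u'$ and $\bar v\le\bar v'$ componentwise. *)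

theory Defs
  imports Complex_Main
begin

text \<open>Both sides P and Q are indexed by the same finite type 'n
  (p_i for i :: 'n, q_j for j :: 'n), so |P| = |Q| = n. A matching is a bijection
  mu :: 'n => 'n with p_i matched to q_(mu i). rp i / rq j say whether p_i / q_j is rigid.
  Reservation prices are modelled by rigid dummy agents, which are ordinary agents here,
  so all matchings are perfect.\<close>

definition rifle_game :: "('n::finite \<Rightarrow> 'n \<Rightarrow> real) \<Rightarrow> ('n \<Rightarrow> 'n \<Rightarrow> real) \<Rightarrow> bool" where
  "rifle_game \<beta> \<gamma> \<longleftrightarrow> (\<forall>i j. 0 \<le> \<beta> i j \<and> 0 \<le> \<gamma> i j)"

type_synonym 'n outcome = "('n \<Rightarrow> real) \<times> ('n \<Rightarrow> real) \<times> ('n \<Rightarrow> 'n)"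

definition feasible ::
  "('n::finite \<Rightarrow> 'n \<Rightarrow> real) \<Rightarrow> ('n \<Rightarrow> 'n \<Rightarrow> real) \<Rightarrow> ('n \<Rightarrow> bool) \<Rightarrow> ('n \<Rightarrow> bool)
    \<Rightarrow> 'n outcome \<Rightarrow> bool" where
  "feasible \<beta> \<gamma> rp rq x \<longleftrightarrow> (case x of (u, v, \<mu>) \<Rightarrow>
     bij \<mu> \<and>
     (\<forall>i. 0 \<le> u i) \<and> (\<forall>j. 0 \<le> v j) \<and>
     (\<forall>i. rp i \<longrightarrow> u i = \<beta> i (\<mu> i) \<and> (\<not> rq (\<mu> i) \<longrightarrow> v (\<mu> i) \<ge> \<gamma> i (\<mu> i))) \<and>
     (\<forall>i. rq (\<mu> i) \<longrightarrow> v (\<mu> i) = \<gamma> i (\<mu> i) \<and> (\<not> rp i \<longrightarrow> u i \<ge> \<beta> i (\<mu> i))) \<and>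
     (\<Sum>i\<in>UNIV. u i) + (\<Sum>j\<in>UNIV. v j) = (\<Sum>i\<in>UNIV. \<beta> i (\<mu> i) + \<gamma> i (\<mu> i)))"

definition stable ::
  "('n::finite \<Rightarrow> 'n \<Rightarrow> real) \<Rightarrow> ('n \<Rightarrow> 'n \<Rightarrow> real) \<Rightarrow> ('n \<Rightarrow> bool) \<Rightarrow> ('n \<Rightarrow> bool)
    \<Rightarrow> 'n outcome \<Rightarrow> bool" where
  "stable \<beta> \<gamma> rp rq x \<longleftrightarrow> feasible \<beta> \<gamma> rp rq x \<and> (case x of (u, v, \<mu>) \<Rightarrow>
     (\<forall>i j. \<not> rp i \<and> \<not> rq j \<longrightarrow> u i + v j \<ge> \<beta> i j + \<gamma> i j) \<and>
     (\<forall>i j. rp i \<or> rq j \<longrightarrow> u i \<ge> \<beta> i j \<or> v j \<ge> \<gamma> i j))"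

text \<open>Coalition C = (CP, CQ): CP the indices of its P-agents, CQ those of its Q-agents.\<close>

definition forced :: "('n \<Rightarrow> bool) \<Rightarrow> ('n \<Rightarrow> bool) \<Rightarrow> 'n set \<Rightarrow> 'n set \<Rightarrow> ('n \<Rightarrow> 'n) \<Rightarrow> bool" where
  "forced rp rq CP CQ \<mu> \<longleftrightarrow>
     (\<forall>i. (i \<in> CP) \<noteq> (\<mu> i \<in> CQ) \<longrightarrow> rp i \<or> rq (\<mu> i))"

definition forced_payoff ::
  "('n::finite \<Rightarrow> 'n \<Rightarrow> real) \<Rightarrow> ('n \<Rightarrow> 'n \<Rightarrow> real) \<Rightarrow> 'n set \<Rightarrow> 'n set \<Rightarrow> ('n \<Rightarrow> 'n) \<Rightarrow> real" where
  "forced_payoff \<beta> \<gamma> CP CQ \<mu> =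
     (\<Sum>i\<in>CP. \<beta> i (\<mu> i)) + (\<Sum>i\<in>{i. \<mu> i \<in> CQ}. \<gamma> i (\<mu> i))"

definition forced_both :: "('n \<Rightarrow> bool) \<Rightarrow> ('n \<Rightarrow> bool) \<Rightarrow> 'n set \<Rightarrow> 'n set \<Rightarrow> ('n \<Rightarrow> 'n) \<Rightarrow> ('n \<Rightarrow> 'n) \<Rightarrow> bool" where
  "forced_both rp rq CP CQ \<mu> \<mu>' \<longleftrightarrow> forced rp rq CP CQ \<mu> \<and> forced rp rq CP CQ \<mu>'"

definition minimal_forced ::
  "('n \<Rightarrow> bool) \<Rightarrow> ('n \<Rightarrow> bool) \<Rightarrow> 'n set \<Rightarrow> 'n set \<Rightarrow> ('n \<Rightarrow> 'n) \<Rightarrow> ('n \<Rightarrow> 'n) \<Rightarrow> bool" where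
  "minimal_forced rp rq CP CQ \<mu> \<mu>' \<longleftrightarrow>
     (CP \<noteq> {} \<or> CQ \<noteq> {}) \<and> forced_both rp rq CP CQ \<mu> \<mu>' \<and>
     (\<forall>DP DQ. DP \<subseteq> CP \<and> DQ \<subseteq> CQ \<and> (DP \<noteq> {} \<or> DQ \<noteq> {}) \<and> (DP, DQ) \<noteq> (CP, CQ)
        \<longrightarrow> \<not> forced_both rp rq DP DQ \<mu> \<mu>')"

definition non_degenerate ::
  "('n::finite \<Rightarrow> 'n \<Rightarrow> real) \<Rightarrow> ('n \<Rightarrow> 'n \<Rightarrow> real) \<Rightarrow> ('n \<Rightarrow> bool) \<Rightarrow> ('n \<Rightarrow> bool) \<Rightarrow> bool" where
  "non_degenerate \<beta> \<gamma> rp rq \<longleftrightarrow>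
     (\<forall>\<mu> \<mu>' CP CQ. bij \<mu> \<and> bij \<mu>' \<and> minimal_forced rp rq CP CQ \<mu> \<mu>' \<and>
        forced_payoff \<beta> \<gamma> CP CQ \<mu> = forced_payoff \<beta> \<gamma> CP CQ \<mu>' \<longrightarrow>
        (\<forall>i\<in>CP. \<mu> i = \<mu>' i) \<and> (\<forall>j\<in>CQ. inv \<mu> j = inv \<mu>' j))"

definition geP :: "'n outcome \<Rightarrow> 'n outcome \<Rightarrow> bool" where
  "geP x y \<longleftrightarrow> (case x of (u, v, _) \<Rightarrow> case y of (u', v', _) \<Rightarrow>
     (\<forall>i. u' i \<le> u i) \<and> (\<forall>j. v j \<le> v' j))"

definition is_lattice_under :: "'a set \<Rightarrow> ('a \<Rightarrow> 'a \<Rightarrow> bool) \<Rightarrow> bool" where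
  "is_lattice_under S ge \<longleftrightarrow>
     (\<forall>x\<in>S. \<forall>y\<in>S.
        (\<exists>z\<in>S. ge z x \<and> ge z y \<and> (\<forall>w\<in>S. ge w x \<and> ge w y \<longrightarrow> ge w z)) \<and>
        (\<exists>z\<in>S. ge x z \<and> ge y z \<and> (\<forall>w\<in>S. ge x w \<and> ge y w \<longrightarrow> ge z w)))"

end

theory Submission
  imports Defs
begin

lemma crux:
  fixes f :: "'c \<Rightarrow> 'c" and d :: "'c \<Rightarrow> real" and fl :: "'c \<Rightarrow> bool"
  assumes inj: "inj f"
    and F1: "\<And>c. \<not> (d c > 0 \<and> d (f c) < 0)"
    and F2: "\<And>c. fl c \<Longrightarrow> d c \<le> d (f c)"
    and ND: "\<And>K. \<forall>c\<in>K. d c = 0 \<Longrightarrow> \<forall>c. (c\<in>K) \<noteq> (f c \<in> K) \<longrightarrow> \<not> fl c \<Longrightarrow> \<forall>c\<in>K. f (f c) = c"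
    and pos: "d a > 0"
    and tie: "\<forall>k. 0<k \<and> k<m \<longrightarrow> d ((f^^k) a) = 0"
    and neg: "d ((f^^m) a) < 0"
  shows False
proof -
  have m0: "m \<noteq> 0" using pos neg by (cases m) auto
  have m1: "m \<noteq> 1" using pos neg F1[of a] by auto
  define K where "K = {c. \<exists>k. 0<k \<and> k<m \<and> c = (f^^k) a}"
  have K0: "\<forall>c\<in>K. d c = 0" using tie K_def by auto
  have Kf: "\<forall>c. (c\<in>K) \<noteq> (f c \<in> K) \<longrightarrow> \<not> fl c"
  proof (intro allI impI)
    fix c assume "(c\<in>K) \<noteq> (f c \<in> K)"
    then consider "c\<in>K" "f c \<notin> K" | "c \<notin> K" "f c \<in> K" by blast
    then show "\<not> fl c"
    proof cases
      case 1
      then obtain k where k: "0<k" "k<m" "c = (f^^k) a" unfolding K_def by auto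
      have fc: "f c = (f^^(Suc k)) a" using k by simp
      have "\<not> Suc k < m"
      proof
        assume "Suc k < m" then have "f c \<in> K" unfolding K_def using fc by blast
        with 1 show False by simp
      qed
      then have "Suc k = m" using k by simp
      then have "d (f c) < 0" using fc neg by simp
      moreover have "d c = 0" using K0 1 by auto
      ultimately show ?thesis using F2[of c] by auto
    next
      case 2
      then obtain k where k: "0<k" "k<m" "f c = (f^^k) a" unfolding K_def by auto
      then obtain k' where k': "k = Suc k'" by (cases k) auto
      show ?thesis
      proof (cases "k' = 0")
        case True
        then have "f c = f a" using k k' by simp
        then have ca: "c = a" using inj by (simp add: inj_eq)
        have "d (f a) = 0" using tie k k' True by auto
        then show ?thesis using F2[of c] ca pos by auto
      next
        case False
        have "f c = f ((f^^k') a)" using k k' by simp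
        then have "c = (f^^k') a" using inj by (simp add: inj_eq)
        then have "c \<in> K" unfolding K_def using False k k' by auto
        with 2 show ?thesis by simp
      qed
    qed
  qed
  have ff: "\<forall>c\<in>K. f (f c) = c" using ND[OF K0 Kf] .
  have "f a \<in> K" unfolding K_def using m0 m1
    by (rule_tac CollectI, rule_tac x=1 in exI) auto
  then have "f (f (f a)) = f a" using ff by blast
  then have a2: "f (f a) = a" using inj by (simp add: inj_eq)
  have "(f^^2) a = a" using a2 by (simp add: numeral_2_eq_2)
  show False
  proof (cases "m = 2")
    case True then show ?thesis using neg pos \<open>(f^^2) a = a\<close> by simp
  next
    case False
    then have "d ((f^^2) a) = 0" using tie m0 m1 by auto
    then show ?thesis using pos \<open>(f^^2) a = a\<close> by simp
  qed
qed


lemma path_lemma: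
  fixes f :: "'c \<Rightarrow> 'c" and d :: "'c \<Rightarrow> real" and fl :: "'c \<Rightarrow> bool"
  assumes inj: "inj f"
    and F1: "\<And>c. \<not> (d c > 0 \<and> d (f c) < 0)"
    and F2: "\<And>c. fl c \<Longrightarrow> d c \<le> d (f c)"
    and ND: "\<And>K. \<forall>c\<in>K. d c = 0 \<Longrightarrow> \<forall>c. (c\<in>K) \<noteq> (f c \<in> K) \<longrightarrow> \<not> fl c \<Longrightarrow> \<forall>c\<in>K. f (f c) = c"
    and pos: "d a > 0"
  shows "d ((f^^n) a) \<ge> 0"
proof -
  have "d ((f^^n) a) > 0 \<or> (d ((f^^n) a) = 0 \<and> (\<exists>m\<le>n. d ((f^^m) a) > 0 \<and> (\<forall>k. m<k \<and> k\<le>n \<longrightarrow> d ((f^^k) a) = 0)))"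
  proof (induction n)
    case 0
    then show ?case using pos by simp
  next
    case (Suc n)
    define b where "b = (f^^n) a"
    have b': "(f^^Suc n) a = f b" unfolding b_def by simp
    from Suc.IH consider "d b > 0" | m where "d b = 0" "m \<le> n" "d ((f^^m) a) > 0" "\<forall>k. m<k \<and> k\<le>n \<longrightarrow> d ((f^^k) a) = 0"
      unfolding b_def by blast
    then show ?case
    proof cases
      case 1
      then have "d (f b) \<ge> 0" using F1[of b] by linarith
      then show ?thesis
      proof (cases "d (f b) > 0")
        case False
        then have "d (f b) = 0" using \<open>d (f b) \<ge> 0\<close> by simp
        moreover have "\<forall>k. n<k \<and> k\<le>Suc n \<longrightarrow> d ((f^^k) a) = 0" using \<open>d (f b) = 0\<close> b'
          by (metis le_SucE not_le)
        ultimately have "d ((f^^Suc n) a) = 0 \<and> n \<le> Suc n \<and> d ((f^^n) a) > 0 \<and> (\<forall>k. n<k \<and> k\<le>Suc n \<longrightarrow> d ((f^^k) a) = 0)"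
          using 1 b_def b' by simp
        then show ?thesis by blast
      qed (simp add: b_def)
    next
      case 2
      note m = 2
      show ?thesis
      proof (cases "d (f b) < 0")
        case True
        define a0 where "a0 = (f^^m) a"
        have it: "\<And>k. (f^^k) a0 = (f^^(k+m)) a" unfolding a0_def by (simp add: funpow_add)
        have "\<forall>k. 0<k \<and> k< Suc n - m \<longrightarrow> d ((f^^k) a0) = 0"
          using m(4) it by auto
        moreover have "(f^^(Suc n - m)) a0 = f b" using it b' m(2)
          by (metis Suc_diff_le le_add_diff_inverse2 Suc_le_mono le_SucI diff_add)
        ultimately have False
          using crux[where f=f and d=d and fl=fl and a=a0 and m="Suc n - m", OF inj F1 F2 ND] m(3) True a0_def by auto
        then show ?thesis ..
      next
        case False
        then show ?thesis
        proof (cases "d (f b) > 0")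
          case False
          then have "d (f b) = 0" using \<open>\<not> d (f b) < 0\<close> by simp
          moreover have "\<forall>k. m<k \<and> k\<le>Suc n \<longrightarrow> d ((f^^k) a) = 0" using \<open>d (f b) = 0\<close> b' m(4)
            by (metis le_SucE)
          ultimately have "d ((f^^Suc n) a) = 0 \<and> m \<le> Suc n \<and> d ((f^^m) a) > 0 \<and> (\<forall>k. m<k \<and> k\<le>Suc n \<longrightarrow> d ((f^^k) a) = 0)"
            using m b' by simp
          then show ?thesis by blast
        qed (simp add: b_def)
      qed
    qed
  qed
  then show ?thesis by auto
qed


lemma core:
  fixes \<mu> \<mu>' :: "'a::finite \<Rightarrow> 'b::finite" and dP :: "'a \<Rightarrow> real" and dQ :: "'b \<Rightarrow> real"
    and fl :: "'a \<Rightarrow> 'b \<Rightarrow> bool"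
  assumes bij1: "bij \<mu>" and bij2: "bij \<mu>'"
    and E1: "\<And>i. \<not> (dP i > 0 \<and> dQ (\<mu> i) < 0)" and E1f: "\<And>i. fl i (\<mu> i) \<Longrightarrow> dP i \<le> dQ (\<mu> i)"
    and E2: "\<And>i. \<not> (dQ (\<mu>' i) > 0 \<and> dP i < 0)" and E2f: "\<And>i. fl i (\<mu>' i) \<Longrightarrow> dQ (\<mu>' i) \<le> dP i"
    and ND: "\<And>CP CQ. \<forall>i\<in>CP. dP i = 0 \<Longrightarrow> \<forall>j\<in>CQ. dQ j = 0 \<Longrightarrow>
       \<forall>i. (i\<in>CP) \<noteq> (\<mu> i \<in> CQ) \<longrightarrow> \<not> fl i (\<mu> i) \<Longrightarrow>
       \<forall>i. (i\<in>CP) \<noteq> (\<mu>' i \<in> CQ) \<longrightarrow> \<not> fl i (\<mu>' i) \<Longrightarrow>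
       (\<forall>i\<in>CP. \<mu> i = \<mu>' i) \<and> (\<forall>j\<in>CQ. inv \<mu> j = inv \<mu>' j)"
  shows "\<exists>\<nu>. bij \<nu> \<and> (\<forall>i. (\<nu> i = \<mu> i \<and> dP i \<ge> 0 \<and> dQ (\<mu> i) \<ge> 0) \<or> (\<nu> i = \<mu>' i \<and> dP i \<le> 0 \<and> dQ (\<mu>' i) \<le> 0))"
proof -
  have i1: "\<And>i. inv \<mu> (\<mu> i) = i" using bij1 by (simp add: bij_is_inj)
  have s1: "\<And>j. \<mu> (inv \<mu> j) = j" using bij1 by (simp add: bij_is_surj surj_f_inv_f)
  have i2: "\<And>i. inv \<mu>' (\<mu>' i) = i" using bij2 by (simp add: bij_is_inj)
  have s2: "\<And>j. \<mu>' (inv \<mu>' j) = j" using bij2 by (simp add: bij_is_surj surj_f_inv_f)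
  define f :: "'a + 'b \<Rightarrow> 'a + 'b" where "f = case_sum (\<lambda>i. Inr (\<mu> i)) (\<lambda>j. Inl (inv \<mu>' j))"
  define d :: "'a + 'b \<Rightarrow> real" where "d = case_sum dP dQ"
  define fl' :: "'a + 'b \<Rightarrow> bool" where "fl' = case_sum (\<lambda>i. fl i (\<mu> i)) (\<lambda>j. fl (inv \<mu>' j) j)"
  have fL: "\<And>i. f (Inl i) = Inr (\<mu> i)" and fR: "\<And>j. f (Inr j) = Inl (inv \<mu>' j)" by (simp_all add: f_def)
  have injf: "inj f"
  proof (rule injI)
    fix x y assume "f x = f y"
    then show "x = y"
      apply (cases x; cases y; simp add: fL fR)
       apply (metis i1)
      apply (metis s2)
      done
  qed
  have F1: "\<And>c. \<not> (d c > 0 \<and> d (f c) < 0)"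
  proof -
    fix c show "\<not> (d c > 0 \<and> d (f c) < 0)"
    proof (cases c)
      case (Inl i) then show ?thesis using E1[of i] by (simp add: d_def fL)
    next
      case (Inr j) then show ?thesis using E2[of "inv \<mu>' j"] by (simp add: d_def fR s2)
    qed
  qed
  have F2: "\<And>c. fl' c \<Longrightarrow> d c \<le> d (f c)"
  proof -
    fix c assume "fl' c" then show "d c \<le> d (f c)"
    proof (cases c)
      case (Inl i) then show ?thesis using E1f[of i] \<open>fl' c\<close> by (simp add: d_def fL fl'_def)
    next
      case (Inr j) then show ?thesis using E2f[of "inv \<mu>' j"] \<open>fl' c\<close> by (simp add: d_def fR s2 fl'_def)
    qed
  qed
  have ND': "\<forall>c\<in>K. f (f c) = c" if K0: "\<forall>c\<in>K. d c = 0" and Kf: "\<forall>c. (c\<in>K) \<noteq> (f c \<in> K) \<longrightarrow> \<not> fl' c" for K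
  proof -
    define CP where "CP = {i. Inl i \<in> K}"
    define CQ where "CQ = {j. Inr j \<in> K}"
    have a: "\<forall>i\<in>CP. dP i = 0" using K0 by (auto simp: CP_def d_def)
    have b: "\<forall>j\<in>CQ. dQ j = 0" using K0 by (auto simp: CQ_def d_def)
    have c: "\<forall>i. (i\<in>CP) \<noteq> (\<mu> i \<in> CQ) \<longrightarrow> \<not> fl i (\<mu> i)"
    proof (intro allI impI)
      fix i assume "(i\<in>CP) \<noteq> (\<mu> i \<in> CQ)"
      then have "(Inl i \<in> K) \<noteq> (f (Inl i) \<in> K)" by (simp add: CP_def CQ_def fL)
      then show "\<not> fl i (\<mu> i)" using Kf by (auto simp: fl'_def)
    qed
    have e: "\<forall>i. (i\<in>CP) \<noteq> (\<mu>' i \<in> CQ) \<longrightarrow> \<not> fl i (\<mu>' i)"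
    proof (intro allI impI)
      fix i assume "(i\<in>CP) \<noteq> (\<mu>' i \<in> CQ)"
      then have "(Inr (\<mu>' i) \<in> K) \<noteq> (f (Inr (\<mu>' i)) \<in> K)" by (auto simp: CP_def CQ_def fR i2)
      then have "\<not> fl' (Inr (\<mu>' i))" using Kf by blast
      then show "\<not> fl i (\<mu>' i)" by (simp add: fl'_def i2)
    qed
    from ND[OF a b c e] have A: "\<forall>i\<in>CP. \<mu> i = \<mu>' i" and B: "\<forall>j\<in>CQ. inv \<mu> j = inv \<mu>' j" by auto
    show ?thesis
    proof
      fix c assume "c \<in> K"
      show "f (f c) = c"
      proof (cases c)
        case (Inl i)
        then have "\<mu> i = \<mu>' i" using A \<open>c\<in>K\<close> by (auto simp: CP_def)
        then show ?thesis using Inl by (simp add: fL fR i2)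
      next
        case (Inr j)
        then have "inv \<mu> j = inv \<mu>' j" using B \<open>c\<in>K\<close> by (auto simp: CQ_def)
        then show ?thesis using Inr by (metis fL fR s1)
      qed
    qed
  qed
  have PL: "\<And>a n. d a > 0 \<Longrightarrow> d ((f^^n) a) \<ge> 0"
    by (rule path_lemma[where f=f and d=d and fl=fl', OF injf F1 F2 ND']) auto
  define N where "N = {c. \<exists>n. d ((f^^n) c) < 0}"
  have Nback: "c \<in> N" if "f c \<in> N" for c
  proof -
    from that obtain n where "d ((f^^n) (f c)) < 0" unfolding N_def by auto
    then have "d ((f^^Suc n) c) < 0" by (simp add: funpow_Suc_right del: funpow.simps)
    then show ?thesis unfolding N_def by blast
  qed
  have Npos: "d c \<le> 0" if "c \<in> N" for c
  proof (rule ccontr)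
    assume "\<not> d c \<le> 0"
    then have H: "\<forall>n. d ((f^^n) c) \<ge> 0" using PL by auto
    from that obtain n where "d ((f^^n) c) < 0" unfolding N_def by blast
    with H show False by (metis not_le)
  qed
  have Nneg: "d c \<ge> 0" if "c \<notin> N" for c
  proof (rule ccontr)
    assume "\<not> d c \<ge> 0"
    then have "d ((f^^0) c) < 0" by simp
    with that show False unfolding N_def by blast
  qed
  define \<nu> where "\<nu> i = (if Inl i \<in> N then \<mu>' i else \<mu> i)" for i
  have injnu: "inj \<nu>"
  proof (rule injI)
    fix x y assume xy: "\<nu> x = \<nu> y"
    have mixed: False if "Inl i1 \<in> N" "Inl i2 \<notin> N" "\<mu>' i1 = \<mu> i2" for i1 i2
    proof -
      have "f (Inr (\<mu>' i1)) = Inl i1" by (simp add: fR i2)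
      then have "Inr (\<mu>' i1) \<in> N" using Nback that(1) by metis
      then have "f (Inl i2) \<in> N" using that(3) by (simp add: fL)
      then have "Inl i2 \<in> N" using Nback by blast
      with that(2) show False by simp
    qed
    show "x = y"
    proof (cases "Inl x \<in> N"; cases "Inl y \<in> N")
      assume "Inl x \<in> N" "Inl y \<in> N" then show ?thesis using xy \<nu>_def i2 by metis
    next
      assume "Inl x \<notin> N" "Inl y \<notin> N" then show ?thesis using xy \<nu>_def i1 by metis
    next
      assume "Inl x \<in> N" "Inl y \<notin> N" then show ?thesis using xy mixed[of x y] by (simp add: \<nu>_def)
    next
      assume "Inl x \<notin> N" "Inl y \<in> N" then show ?thesis using xy mixed[of y x] by (simp add: \<nu>_def)
    qed
  qed
  have "surj \<nu>"
  proof -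
    have "inj (inv \<mu> \<circ> \<nu>)" using injnu bij1
      by (simp add: inj_compose bij_imp_bij_inv bij_is_inj)
    then have "surj (inv \<mu> \<circ> \<nu>)" using finite_UNIV_inj_surj[of "inv \<mu> \<circ> \<nu>"] by simp
    show ?thesis
      unfolding surj_def
    proof
      fix j
      obtain i where "inv \<mu> j = (inv \<mu> \<circ> \<nu>) i" using \<open>surj (inv \<mu> \<circ> \<nu>)\<close> by (metis surj_def)
      then have "\<mu> (inv \<mu> j) = \<mu> (inv \<mu> (\<nu> i))" by simp
      then have "j = \<nu> i" using s1 by simp
      then show "\<exists>x. j = \<nu> x" ..
    qed
  qed
  then have "bij \<nu>" using injnu by (simp add: bij_def)
  moreover have "(\<nu> i = \<mu> i \<and> dP i \<ge> 0 \<and> dQ (\<mu> i) \<ge> 0) \<or> (\<nu> i = \<mu>' i \<and> dP i \<le> 0 \<and> dQ (\<mu>' i) \<le> 0)" for i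
  proof (cases "Inl i \<in> N")
    case True
    have "f (Inr (\<mu>' i)) = Inl i" by (simp add: fR i2)
    then have "Inr (\<mu>' i) \<in> N" using Nback True by metis
    then show ?thesis using True Npos[of "Inl i"] Npos[of "Inr (\<mu>' i)"] by (simp add: \<nu>_def d_def)
  next
    case False
    have "Inr (\<mu> i) \<notin> N" using Nback False fL by metis
    then show ?thesis using False Nneg[of "Inl i"] Nneg[of "Inr (\<mu> i)"] by (simp add: \<nu>_def d_def)
  qed
  ultimately show ?thesis by blast
qed


lemma sum_UNIV_if:
  fixes g :: "'a::finite \<Rightarrow> real"
  shows "(\<Sum>i\<in>A. g i) = (\<Sum>i\<in>UNIV. if i \<in> A then g i else 0)"
  using sum.inter_restrict[of UNIV g A] by simp

lemma stable_bij: "stable \<beta> \<gamma> rp rq (u, v, \<mu>) \<Longrightarrow> bij \<mu>"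
  by (simp add: stable_def feasible_def)

lemma tight:
  fixes \<beta> \<gamma> :: "'n::finite \<Rightarrow> 'n \<Rightarrow> real"
  assumes st: "stable \<beta> \<gamma> rp rq (u, v, \<mu>)"
  shows "u i + v (\<mu> i) = \<beta> i (\<mu> i) + \<gamma> i (\<mu> i) \<and>
         ((rp i \<or> rq (\<mu> i)) \<longrightarrow> u i = \<beta> i (\<mu> i) \<and> v (\<mu> i) = \<gamma> i (\<mu> i))"
proof -
  from st have bij: "bij \<mu>"
    and rpC: "\<forall>i. rp i \<longrightarrow> u i = \<beta> i (\<mu> i) \<and> (\<not> rq (\<mu> i) \<longrightarrow> v (\<mu> i) \<ge> \<gamma> i (\<mu> i))"
    and rqC: "\<forall>i. rq (\<mu> i) \<longrightarrow> v (\<mu> i) = \<gamma> i (\<mu> i) \<and> (\<not> rp i \<longrightarrow> u i \<ge> \<beta> i (\<mu> i))"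
    and sumC: "(\<Sum>i\<in>UNIV. u i) + (\<Sum>j\<in>UNIV. v j) = (\<Sum>i\<in>UNIV. \<beta> i (\<mu> i) + \<gamma> i (\<mu> i))"
    and stF: "\<forall>i j. \<not> rp i \<and> \<not> rq j \<longrightarrow> u i + v j \<ge> \<beta> i j + \<gamma> i j"
    by (simp_all add: stable_def feasible_def)
  have ge: "u k + v (\<mu> k) \<ge> \<beta> k (\<mu> k) + \<gamma> k (\<mu> k)" for k
    using rpC[rule_format, of k] rqC[rule_format, of k] stF[rule_format, of k "\<mu> k"]
    by (cases "rp k"; cases "rq (\<mu> k)") auto
  have reidx: "(\<Sum>i\<in>UNIV. v (\<mu> i)) = (\<Sum>j\<in>UNIV. v j)"
    using sum.reindex_bij_betw[of \<mu> UNIV UNIV v] bij by simp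
  have "(\<Sum>k\<in>UNIV. (u k + v (\<mu> k)) - (\<beta> k (\<mu> k) + \<gamma> k (\<mu> k))) = 0"
    using sumC reidx by (simp add: sum.distrib sum_subtractf)
  then have "\<forall>k\<in>UNIV. (u k + v (\<mu> k)) - (\<beta> k (\<mu> k) + \<gamma> k (\<mu> k)) = 0"
    by (subst (asm) sum_nonneg_eq_0_iff) (use ge in auto)
  then have eq: "u i + v (\<mu> i) = \<beta> i (\<mu> i) + \<gamma> i (\<mu> i)" by auto
  then show ?thesis using rpC[rule_format, of i] rqC[rule_format, of i] by auto
qed

lemma FP:
  fixes \<beta> \<gamma> :: "'n::finite \<Rightarrow> 'n \<Rightarrow> real"
  assumes st: "stable \<beta> \<gamma> rp rq (u, v, \<mu>)" and fo: "forced rp rq DP DQ \<mu>"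
  shows "forced_payoff \<beta> \<gamma> DP DQ \<mu> = sum u DP + sum v DQ"
proof -
  have bij: "bij \<mu>" using st by (rule stable_bij)
  have s1: "\<And>j. \<mu> (inv \<mu> j) = j" using bij by (simp add: bij_is_surj surj_f_inv_f)
  have img: "\<mu> ` {i. \<mu> i \<in> DQ} = DQ"
  proof
    show "\<mu> ` {i. \<mu> i \<in> DQ} \<subseteq> DQ" by auto
    show "DQ \<subseteq> \<mu> ` {i. \<mu> i \<in> DQ}"
    proof
      fix j assume "j \<in> DQ"
      then have "inv \<mu> j \<in> {i. \<mu> i \<in> DQ}" using s1 by simp
      then show "j \<in> \<mu> ` {i. \<mu> i \<in> DQ}" using s1 by (metis image_eqI)
    qed
  qed
  have r: "sum v DQ = (\<Sum>i\<in>{i. \<mu> i \<in> DQ}. v (\<mu> i))"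
  proof -
    have "inj_on \<mu> {i. \<mu> i \<in> DQ}" using bij bij_is_inj inj_on_subset subset_UNIV by blast
    then show ?thesis using sum.reindex[of \<mu> "{i. \<mu> i \<in> DQ}" v] img by simp
  qed
  have T: "\<And>i. u i + v (\<mu> i) = \<beta> i (\<mu> i) + \<gamma> i (\<mu> i) \<and>
         ((rp i \<or> rq (\<mu> i)) \<longrightarrow> u i = \<beta> i (\<mu> i) \<and> v (\<mu> i) = \<gamma> i (\<mu> i))"
    using tight[OF st] by blast
  have F: "\<And>i. (i \<in> DP) \<noteq> (\<mu> i \<in> DQ) \<Longrightarrow> rp i \<or> rq (\<mu> i)" using fo by (simp add: forced_def)
  have pt: "(if i \<in> DP then u i else 0) + (if i \<in> {i. \<mu> i \<in> DQ} then v (\<mu> i) else 0)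
      = (if i \<in> DP then \<beta> i (\<mu> i) else 0) + (if i \<in> {i. \<mu> i \<in> DQ} then \<gamma> i (\<mu> i) else 0)" for i
    using T[of i] F[of i] by auto
  have "sum u DP + sum v DQ = (\<Sum>i\<in>UNIV. (if i \<in> DP then u i else 0) + (if i \<in> {i. \<mu> i \<in> DQ} then v (\<mu> i) else 0))"
    unfolding r by (simp add: sum.distrib sum_UNIV_if[of u DP] sum_UNIV_if[of "\<lambda>i. v (\<mu> i)"])
  also have "\<dots> = (\<Sum>i\<in>UNIV. (if i \<in> DP then \<beta> i (\<mu> i) else 0) + (if i \<in> {i. \<mu> i \<in> DQ} then \<gamma> i (\<mu> i) else 0))"
    using pt by simp
  also have "\<dots> = forced_payoff \<beta> \<gamma> DP DQ \<mu>"
    unfolding forced_payoff_def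
    by (simp add: sum.distrib sum_UNIV_if[of "\<lambda>i. \<beta> i (\<mu> i)" DP] sum_UNIV_if[of "\<lambda>i. \<gamma> i (\<mu> i)"])
  finally show ?thesis by simp
qed

lemma forced_diff:
  "forced rp rq CP CQ \<mu> \<Longrightarrow> forced rp rq DP DQ \<mu> \<Longrightarrow> forced rp rq (CP - DP) (CQ - DQ) \<mu>"
  unfolding forced_def by blast


lemma L2:
  fixes \<beta> \<gamma> :: "'n::finite \<Rightarrow> 'n \<Rightarrow> real"
  assumes nd: "non_degenerate \<beta> \<gamma> rp rq"
    and sx: "stable \<beta> \<gamma> rp rq (u, v, \<mu>)" and sy: "stable \<beta> \<gamma> rp rq (u', v', \<mu>')"
  shows "forced rp rq CP CQ \<mu> \<Longrightarrow> forced rp rq CP CQ \<mu>' \<Longrightarrow> \<forall>i\<in>CP. u i = u' i \<Longrightarrow> \<forall>j\<in>CQ. v j = v' j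
     \<Longrightarrow> (\<forall>i\<in>CP. \<mu> i = \<mu>' i) \<and> (\<forall>j\<in>CQ. inv \<mu> j = inv \<mu>' j)"
proof (induction "card CP + card CQ" arbitrary: CP CQ rule: less_induct)
  case less
  note fC = less.prems(1) and fC' = less.prems(2) and tu = less.prems(3) and tv = less.prems(4)
  show ?case
  proof (cases "CP = {} \<and> CQ = {}")
    case True then show ?thesis by simp
  next
    case False
    define S where "S = {(DP,DQ). DP \<subseteq> CP \<and> DQ \<subseteq> CQ \<and> (DP \<noteq> {} \<or> DQ \<noteq> {}) \<and> forced_both rp rq DP DQ \<mu> \<mu>'}"
    have "(CP, CQ) \<in> S" using False fC fC' by (auto simp: S_def forced_both_def)
    then obtain D where DS: "D \<in> S" and Dmin: "\<forall>E. E \<in> S \<longrightarrow> card (fst D) + card (snd D) \<le> card (fst E) + card (snd E)"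
      using ex_has_least_nat[of "\<lambda>E. E \<in> S" "(CP, CQ)" "\<lambda>E. card (fst E) + card (snd E)"] by blast
    obtain DP DQ where D: "D = (DP, DQ)" by (cases D)
    have sub: "DP \<subseteq> CP" "DQ \<subseteq> CQ" and ne: "DP \<noteq> {} \<or> DQ \<noteq> {}" and fb: "forced_both rp rq DP DQ \<mu> \<mu>'"
      using DS D by (auto simp: S_def)
    have minf: "minimal_forced rp rq DP DQ \<mu> \<mu>'"
      unfolding minimal_forced_def
    proof (intro conjI allI impI)
      show "DP \<noteq> {} \<or> DQ \<noteq> {}" by (rule ne)
      show "forced_both rp rq DP DQ \<mu> \<mu>'" by (rule fb)
      fix EP EQ
      assume H: "EP \<subseteq> DP \<and> EQ \<subseteq> DQ \<and> (EP \<noteq> {} \<or> EQ \<noteq> {}) \<and> (EP, EQ) \<noteq> (DP, DQ)"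
      show "\<not> forced_both rp rq EP EQ \<mu> \<mu>'"
      proof
        assume "forced_both rp rq EP EQ \<mu> \<mu>'"
        then have "(EP, EQ) \<in> S" using H sub by (auto simp: S_def)
        then have le: "card DP + card DQ \<le> card EP + card EQ" using Dmin D by force
        have c1: "card EP \<le> card DP" "card EQ \<le> card DQ" using H by (auto intro: card_mono)
        have "EP \<subset> DP \<or> EQ \<subset> DQ" using H by auto
        then have "card EP < card DP \<or> card EQ < card DQ" by (auto intro: psubset_card_mono)
        with le c1 show False by linarith
      qed
    qed
    have fD: "forced rp rq DP DQ \<mu>" "forced rp rq DP DQ \<mu>'" using fb by (auto simp: forced_both_def)
    have "forced_payoff \<beta> \<gamma> DP DQ \<mu> = sum u DP + sum v DQ" using FP[OF sx fD(1)] .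
    also have "\<dots> = sum u' DP + sum v' DQ"
      using tu tv sub by (metis (no_types, lifting) subsetD sum.cong)
    also have "\<dots> = forced_payoff \<beta> \<gamma> DP DQ \<mu>'" using FP[OF sy fD(2)] by simp
    finally have feq: "forced_payoff \<beta> \<gamma> DP DQ \<mu> = forced_payoff \<beta> \<gamma> DP DQ \<mu>'" .
    have agD: "(\<forall>i\<in>DP. \<mu> i = \<mu>' i) \<and> (\<forall>j\<in>DQ. inv \<mu> j = inv \<mu>' j)"
      using nd stable_bij[OF sx] stable_bij[OF sy] minf feq unfolding non_degenerate_def by blast
    have fE: "forced rp rq (CP - DP) (CQ - DQ) \<mu>" "forced rp rq (CP - DP) (CQ - DQ) \<mu>'"
      using forced_diff fC fD(1) fC' fD(2) by blast+
    have cardE: "card (CP - DP) + card (CQ - DQ) < card CP + card CQ"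
    proof -
      have "card (CP - DP) = card CP - card DP" "card (CQ - DQ) = card CQ - card DQ"
        using sub by (auto intro: card_Diff_subset)
      moreover have "card DP \<le> card CP" "card DQ \<le> card CQ" using sub by (auto intro: card_mono)
      moreover have "card DP > 0 \<or> card DQ > 0" using ne by (auto simp: card_gt_0_iff)
      ultimately show ?thesis by linarith
    qed
    have agE: "(\<forall>i\<in>CP - DP. \<mu> i = \<mu>' i) \<and> (\<forall>j\<in>CQ - DQ. inv \<mu> j = inv \<mu>' j)"
      using less.hyps[OF cardE fE] tu tv by auto
    show ?thesis using agD agE by blast
  qed
qed


lemma edges:
  fixes \<beta> \<gamma> :: "'n::finite \<Rightarrow> 'n \<Rightarrow> real"
  assumes sx: "stable \<beta> \<gamma> rp rq (u, v, \<mu>)" and sy: "stable \<beta> \<gamma> rp rq (u', v', \<mu>')"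
  shows "\<not> (u i > u' i \<and> v' (\<mu> i) < v (\<mu> i))"
    and "\<not> rp i \<and> \<not> rq (\<mu> i) \<Longrightarrow> u i - u' i \<le> v' (\<mu> i) - v (\<mu> i)"
proof -
  have T: "u i + v (\<mu> i) = \<beta> i (\<mu> i) + \<gamma> i (\<mu> i) \<and>
         ((rp i \<or> rq (\<mu> i)) \<longrightarrow> u i = \<beta> i (\<mu> i) \<and> v (\<mu> i) = \<gamma> i (\<mu> i))"
    using tight[OF sx] by blast
  from sy have stF: "\<forall>i j. \<not> rp i \<and> \<not> rq j \<longrightarrow> u' i + v' j \<ge> \<beta> i j + \<gamma> i j"
    and stR: "\<forall>i j. rp i \<or> rq j \<longrightarrow> u' i \<ge> \<beta> i j \<or> v' j \<ge> \<gamma> i j"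
    by (simp_all add: stable_def)
  show "\<not> (u i > u' i \<and> v' (\<mu> i) < v (\<mu> i))"
    using T stF[rule_format, of i "\<mu> i"] stR[rule_format, of i "\<mu> i"] by (cases "rp i \<or> rq (\<mu> i)") auto
  show "\<not> rp i \<and> \<not> rq (\<mu> i) \<Longrightarrow> u i - u' i \<le> v' (\<mu> i) - v (\<mu> i)"
    using T stF[rule_format, of i "\<mu> i"] by auto
qed

lemma Zstable:
  fixes \<beta> \<gamma> :: "'n::finite \<Rightarrow> 'n \<Rightarrow> real"
  assumes sx: "stable \<beta> \<gamma> rp rq (u, v, \<mu>)" and sy: "stable \<beta> \<gamma> rp rq (u', v', \<mu>')"
    and bij: "bij \<nu>"
    and nnU: "\<forall>i. 0 \<le> U i" and nnV: "\<forall>j. 0 \<le> V j"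
    and iF: "\<forall>i j. \<not> rp i \<and> \<not> rq j \<longrightarrow> U i + V j \<ge> \<beta> i j + \<gamma> i j"
    and iR: "\<forall>i j. rp i \<or> rq j \<longrightarrow> U i \<ge> \<beta> i j \<or> V j \<ge> \<gamma> i j"
    and ch: "\<forall>i. (\<nu> i = \<mu> i \<and> U i = u i \<and> V (\<mu> i) = v (\<mu> i)) \<or> (\<nu> i = \<mu>' i \<and> U i = u' i \<and> V (\<mu>' i) = v' (\<mu>' i))"
  shows "stable \<beta> \<gamma> rp rq (U, V, \<nu>)"
proof -
  have T: "U i + V (\<nu> i) = \<beta> i (\<nu> i) + \<gamma> i (\<nu> i) \<and>
         ((rp i \<or> rq (\<nu> i)) \<longrightarrow> U i = \<beta> i (\<nu> i) \<and> V (\<nu> i) = \<gamma> i (\<nu> i))" for i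
    using ch[rule_format, of i] tight[OF sx, of i] tight[OF sy, of i] by auto
  have reidx: "(\<Sum>i\<in>UNIV. V (\<nu> i)) = (\<Sum>j\<in>UNIV. V j)"
    using sum.reindex_bij_betw[of \<nu> UNIV UNIV V] bij by simp
  have sumC: "(\<Sum>i\<in>UNIV. U i) + (\<Sum>j\<in>UNIV. V j) = (\<Sum>i\<in>UNIV. \<beta> i (\<nu> i) + \<gamma> i (\<nu> i))"
  proof -
    have "(\<Sum>i\<in>UNIV. U i) + (\<Sum>j\<in>UNIV. V j) = (\<Sum>i\<in>UNIV. U i + V (\<nu> i))"
      using reidx by (simp add: sum.distrib)
    also have "\<dots> = (\<Sum>i\<in>UNIV. \<beta> i (\<nu> i) + \<gamma> i (\<nu> i))" using T by simp
    finally show ?thesis .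
  qed
  show ?thesis
    unfolding stable_def feasible_def
    using bij nnU nnV iF iR sumC T by auto
qed

theorem theorem2:
  fixes \<beta> \<gamma> :: "'n::finite \<Rightarrow> 'n \<Rightarrow> real" and rp rq :: "'n \<Rightarrow> bool"
  assumes "rifle_game \<beta> \<gamma>"
    and "non_degenerate \<beta> \<gamma> rp rq"
  shows "is_lattice_under {x. stable \<beta> \<gamma> rp rq x} geP"
  unfolding is_lattice_under_def
proof (intro ballI conjI)
  note nd = assms(2)
  fix x y assume xS: "x \<in> {x. stable \<beta> \<gamma> rp rq x}" and yS: "y \<in> {x. stable \<beta> \<gamma> rp rq x}"
  obtain u v \<mu> where x: "x = (u, v, \<mu>)" by (cases x) auto
  obtain u' v' \<mu>' where y: "y = (u', v', \<mu>')" by (cases y) auto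
  have sx: "stable \<beta> \<gamma> rp rq (u, v, \<mu>)" using xS x by simp
  have sy: "stable \<beta> \<gamma> rp rq (u', v', \<mu>')" using yS y by simp
  have b1: "bij \<mu>" using stable_bij[OF sx] .
  have b2: "bij \<mu>'" using stable_bij[OF sy] .
  have i1: "\<And>i. inv \<mu> (\<mu> i) = i" using b1 by (simp add: bij_is_inj)
  have s1: "\<And>j. \<mu> (inv \<mu> j) = j" using b1 by (simp add: bij_is_surj surj_f_inv_f)
  have i2: "\<And>i. inv \<mu>' (\<mu>' i) = i" using b2 by (simp add: bij_is_inj)
  have s2: "\<And>j. \<mu>' (inv \<mu>' j) = j" using b2 by (simp add: bij_is_surj surj_f_inv_f)
  have nx: "\<forall>i. 0 \<le> u i" "\<forall>j. 0 \<le> v j"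
    and fx: "\<forall>i j. \<not> rp i \<and> \<not> rq j \<longrightarrow> u i + v j \<ge> \<beta> i j + \<gamma> i j"
    and rx: "\<forall>i j. rp i \<or> rq j \<longrightarrow> u i \<ge> \<beta> i j \<or> v j \<ge> \<gamma> i j"
    using sx unfolding stable_def feasible_def prod.case by blast+
  have ny: "\<forall>i. 0 \<le> u' i" "\<forall>j. 0 \<le> v' j"
    and fy: "\<forall>i j. \<not> rp i \<and> \<not> rq j \<longrightarrow> u' i + v' j \<ge> \<beta> i j + \<gamma> i j"
    and ry: "\<forall>i j. rp i \<or> rq j \<longrightarrow> u' i \<ge> \<beta> i j \<or> v' j \<ge> \<gamma> i j"
    using sy unfolding stable_def feasible_def prod.case by blast+
  have L: "(\<forall>i\<in>CP. \<mu> i = \<mu>' i) \<and> (\<forall>j\<in>CQ. inv \<mu> j = inv \<mu>' j)"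
    if "forced rp rq CP CQ \<mu>" "forced rp rq CP CQ \<mu>'" "\<forall>i\<in>CP. u i = u' i" "\<forall>j\<in>CQ. v j = v' j" for CP CQ
    using L2[OF nd sx sy that] .
  obtain \<nu> where nu: "bij \<nu>"
    "\<forall>i. (\<nu> i = \<mu> i \<and> u i - u' i \<ge> 0 \<and> v' (\<mu> i) - v (\<mu> i) \<ge> 0) \<or>
         (\<nu> i = \<mu>' i \<and> u i - u' i \<le> 0 \<and> v' (\<mu>' i) - v (\<mu>' i) \<le> 0)"
  proof -
    have "\<exists>\<nu>. bij \<nu> \<and> (\<forall>i. (\<nu> i = \<mu> i \<and> u i - u' i \<ge> 0 \<and> v' (\<mu> i) - v (\<mu> i) \<ge> 0) \<or>
         (\<nu> i = \<mu>' i \<and> u i - u' i \<le> 0 \<and> v' (\<mu>' i) - v (\<mu>' i) \<le> 0))"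
    proof (rule core[where fl = "\<lambda>i j. \<not> rp i \<and> \<not> rq j", OF b1 b2])
      fix i
      show "\<not> (0 < u i - u' i \<and> v' (\<mu> i) - v (\<mu> i) < 0)" using edges(1)[OF sx sy, of i] by auto
      show "\<not> rp i \<and> \<not> rq (\<mu> i) \<Longrightarrow> u i - u' i \<le> v' (\<mu> i) - v (\<mu> i)" using edges(2)[OF sx sy, of i] by auto
      show "\<not> (0 < v' (\<mu>' i) - v (\<mu>' i) \<and> u i - u' i < 0)" using edges(1)[OF sy sx, of i] by auto
      show "\<not> rp i \<and> \<not> rq (\<mu>' i) \<Longrightarrow> v' (\<mu>' i) - v (\<mu>' i) \<le> u i - u' i" using edges(2)[OF sy sx, of i] by auto
    next
      fix CP CQ
      assume a: "\<forall>i\<in>CP. u i - u' i = 0" "\<forall>j\<in>CQ. v' j - v j = 0"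
        "\<forall>i. (i \<in> CP) \<noteq> (\<mu> i \<in> CQ) \<longrightarrow> \<not> (\<not> rp i \<and> \<not> rq (\<mu> i))"
        "\<forall>i. (i \<in> CP) \<noteq> (\<mu>' i \<in> CQ) \<longrightarrow> \<not> (\<not> rp i \<and> \<not> rq (\<mu>' i))"
      have "forced rp rq CP CQ \<mu>" "forced rp rq CP CQ \<mu>'" using a(3,4) by (auto simp: forced_def)
      moreover have "\<forall>i\<in>CP. u i = u' i" "\<forall>j\<in>CQ. v j = v' j" using a(1,2) by auto
      ultimately show "(\<forall>i\<in>CP. \<mu> i = \<mu>' i) \<and> (\<forall>j\<in>CQ. inv \<mu> j = inv \<mu>' j)" using L by blast
    qed
    then show ?thesis using that by blast
  qed
  define z where "z = ((\<lambda>i. max (u i) (u' i)), (\<lambda>j. min (v j) (v' j)), \<nu>)"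
  have sz: "stable \<beta> \<gamma> rp rq z"
    unfolding z_def
  proof (rule Zstable[OF sx sy nu(1)])
    show "\<forall>i. 0 \<le> max (u i) (u' i)" using nx by (auto simp: le_max_iff_disj)
    show "\<forall>j. 0 \<le> min (v j) (v' j)" using nx ny by auto
    show "\<forall>i j. \<not> rp i \<and> \<not> rq j \<longrightarrow> \<beta> i j + \<gamma> i j \<le> max (u i) (u' i) + min (v j) (v' j)"
      using fx fy by (smt (verit))
    show "\<forall>i j. rp i \<or> rq j \<longrightarrow> \<beta> i j \<le> max (u i) (u' i) \<or> \<gamma> i j \<le> min (v j) (v' j)"
      using rx ry by (smt (verit))
    show "\<forall>i. (\<nu> i = \<mu> i \<and> max (u i) (u' i) = u i \<and> min (v (\<mu> i)) (v' (\<mu> i)) = v (\<mu> i)) \<or>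
         (\<nu> i = \<mu>' i \<and> max (u i) (u' i) = u' i \<and> min (v (\<mu>' i)) (v' (\<mu>' i)) = v' (\<mu>' i))"
      using nu(2) by (smt (verit))
  qed
  show "\<exists>z\<in>{x. stable \<beta> \<gamma> rp rq x}. geP z x \<and> geP z y \<and>
          (\<forall>w\<in>{x. stable \<beta> \<gamma> rp rq x}. geP w x \<and> geP w y \<longrightarrow> geP w z)"
  proof (intro bexI conjI ballI impI)
    show "z \<in> {x. stable \<beta> \<gamma> rp rq x}" using sz by simp
    show "geP z x" unfolding z_def x geP_def by simp
    show "geP z y" unfolding z_def y geP_def by simp
    fix w assume "w \<in> {x. stable \<beta> \<gamma> rp rq x}" "geP w x \<and> geP w y"
    then show "geP w z" unfolding z_def x y geP_def by (cases w) auto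
  qed
  obtain \<nu>' where nu': "bij \<nu>'"
    "\<forall>j. (\<nu>' j = inv \<mu> j \<and> v j - v' j \<ge> 0 \<and> u' (inv \<mu> j) - u (inv \<mu> j) \<ge> 0) \<or>
         (\<nu>' j = inv \<mu>' j \<and> v j - v' j \<le> 0 \<and> u' (inv \<mu>' j) - u (inv \<mu>' j) \<le> 0)"
  proof -
    have bi1: "bij (inv \<mu>)" using b1 by (simp add: bij_imp_bij_inv)
    have bi2: "bij (inv \<mu>')" using b2 by (simp add: bij_imp_bij_inv)
    have "\<exists>\<nu>. bij \<nu> \<and> (\<forall>j. (\<nu> j = inv \<mu> j \<and> v j - v' j \<ge> 0 \<and> u' (inv \<mu> j) - u (inv \<mu> j) \<ge> 0) \<or>
         (\<nu> j = inv \<mu>' j \<and> v j - v' j \<le> 0 \<and> u' (inv \<mu>' j) - u (inv \<mu>' j) \<le> 0))"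
    proof (rule core[where fl = "\<lambda>j i. \<not> rp i \<and> \<not> rq j", OF bi1 bi2])
      fix j
      show "\<not> (0 < v j - v' j \<and> u' (inv \<mu> j) - u (inv \<mu> j) < 0)"
        using edges(1)[OF sx sy, of "inv \<mu> j"] s1 by auto
      show "\<not> rp (inv \<mu> j) \<and> \<not> rq j \<Longrightarrow> v j - v' j \<le> u' (inv \<mu> j) - u (inv \<mu> j)"
        using edges(2)[OF sx sy, of "inv \<mu> j"] s1 by auto
      show "\<not> (0 < u' (inv \<mu>' j) - u (inv \<mu>' j) \<and> v j - v' j < 0)"
        using edges(1)[OF sy sx, of "inv \<mu>' j"] s2 by auto
      show "\<not> rp (inv \<mu>' j) \<and> \<not> rq j \<Longrightarrow> u' (inv \<mu>' j) - u (inv \<mu>' j) \<le> v j - v' j"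
        using edges(2)[OF sy sx, of "inv \<mu>' j"] s2 by auto
    next
      fix CP CQ
      assume a: "\<forall>j\<in>CP. v j - v' j = 0" "\<forall>i\<in>CQ. u' i - u i = 0"
        "\<forall>j. (j \<in> CP) \<noteq> (inv \<mu> j \<in> CQ) \<longrightarrow> \<not> (\<not> rp (inv \<mu> j) \<and> \<not> rq j)"
        "\<forall>j. (j \<in> CP) \<noteq> (inv \<mu>' j \<in> CQ) \<longrightarrow> \<not> (\<not> rp (inv \<mu>' j) \<and> \<not> rq j)"
      have "forced rp rq CQ CP \<mu>"
        unfolding forced_def
      proof (intro allI impI)
        fix i assume "(i \<in> CQ) \<noteq> (\<mu> i \<in> CP)"
        then show "rp i \<or> rq (\<mu> i)" using a(3)[rule_format, of "\<mu> i"] i1 by auto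
      qed
      moreover have "forced rp rq CQ CP \<mu>'"
        unfolding forced_def
      proof (intro allI impI)
        fix i assume "(i \<in> CQ) \<noteq> (\<mu>' i \<in> CP)"
        then show "rp i \<or> rq (\<mu>' i)" using a(4)[rule_format, of "\<mu>' i"] i2 by auto
      qed
      moreover have "\<forall>i\<in>CQ. u i = u' i" "\<forall>j\<in>CP. v j = v' j" using a(1,2) by auto
      ultimately have "(\<forall>i\<in>CQ. \<mu> i = \<mu>' i) \<and> (\<forall>j\<in>CP. inv \<mu> j = inv \<mu>' j)" using L by blast
      then show "(\<forall>j\<in>CP. inv \<mu> j = inv \<mu>' j) \<and> (\<forall>i\<in>CQ. inv (inv \<mu>) i = inv (inv \<mu>') i)"
        using b1 b2 by (simp add: inv_inv_eq)
    qed
    then show ?thesis using that by blast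
  qed
  define \<nu> where "\<nu> = inv \<nu>'"
  have bnu: "bij \<nu>" unfolding \<nu>_def using nu'(1) by (simp add: bij_imp_bij_inv)
  have nn: "\<nu>' (\<nu> i) = i" for i unfolding \<nu>_def using nu'(1) by (simp add: bij_is_surj surj_f_inv_f)
  have chm: "(\<nu> i = \<mu> i \<and> min (u i) (u' i) = u i \<and> max (v (\<mu> i)) (v' (\<mu> i)) = v (\<mu> i)) \<or>
         (\<nu> i = \<mu>' i \<and> min (u i) (u' i) = u' i \<and> max (v (\<mu>' i)) (v' (\<mu>' i)) = v' (\<mu>' i))" for i
  proof -
    from nu'(2)[rule_format, of "\<nu> i"] nn[of i]
    consider "i = inv \<mu> (\<nu> i)" "v (\<nu> i) - v' (\<nu> i) \<ge> 0" "u' i - u i \<ge> 0"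
      | "i = inv \<mu>' (\<nu> i)" "v (\<nu> i) - v' (\<nu> i) \<le> 0" "u' i - u i \<le> 0" by auto
    then show ?thesis
    proof cases
      case 1
      then have "\<mu> i = \<nu> i" using s1 by metis
      then show ?thesis using 1 by auto
    next
      case 2
      then have "\<mu>' i = \<nu> i" using s2 by metis
      then show ?thesis using 2 by auto
    qed
  qed
  define z' where "z' = ((\<lambda>i. min (u i) (u' i)), (\<lambda>j. max (v j) (v' j)), \<nu>)"
  have sz': "stable \<beta> \<gamma> rp rq z'"
    unfolding z'_def
  proof (rule Zstable[OF sx sy bnu])
    show "\<forall>i. 0 \<le> min (u i) (u' i)" using nx ny by auto
    show "\<forall>j. 0 \<le> max (v j) (v' j)" using nx by (auto simp: le_max_iff_disj)
    show "\<forall>i j. \<not> rp i \<and> \<not> rq j \<longrightarrow> \<beta> i j + \<gamma> i j \<le> min (u i) (u' i) + max (v j) (v' j)"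
      using fx fy by (smt (verit))
    show "\<forall>i j. rp i \<or> rq j \<longrightarrow> \<beta> i j \<le> min (u i) (u' i) \<or> \<gamma> i j \<le> max (v j) (v' j)"
      using rx ry by (smt (verit))
    show "\<forall>i. (\<nu> i = \<mu> i \<and> min (u i) (u' i) = u i \<and> max (v (\<mu> i)) (v' (\<mu> i)) = v (\<mu> i)) \<or>
         (\<nu> i = \<mu>' i \<and> min (u i) (u' i) = u' i \<and> max (v (\<mu>' i)) (v' (\<mu>' i)) = v' (\<mu>' i))"
      using chm by blast
  qed
  show "\<exists>z\<in>{x. stable \<beta> \<gamma> rp rq x}. geP x z \<and> geP y z \<and>
          (\<forall>w\<in>{x. stable \<beta> \<gamma> rp rq x}. geP x w \<and> geP y w \<longrightarrow> geP z w)"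
  proof (intro bexI conjI ballI impI)
    show "z' \<in> {x. stable \<beta> \<gamma> rp rq x}" using sz' by simp
    show "geP x z'" unfolding z'_def x geP_def by simp
    show "geP y z'" unfolding z'_def y geP_def by simp
    fix w assume "w \<in> {x. stable \<beta> \<gamma> rp rq x}" "geP x w \<and> geP y w"
    then show "geP z' w" unfolding z'_def x y geP_def by (cases w) auto
  qed
qed

end
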